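(* Let $(X,G)$ be a minimal continuous action and $m\in\mathbb{N}$, $m\geq 2$. Then $(X,G)$ is $m$-equicontinuous if and only if $Q_m(X,G)\setminus\Delta^{(m)}(X)=\emptyset$.
   Context: $G$ is a locally compact topological group acting continuously on a compact metric space $(X,d)$; minimal means every orbit is dense. $(X,G)$ is $m$-equicontinuous if for every $x\in X$ and $\varepsilon>0$ there is $\delta>0$ such that for any $x_1,\dots,x_m$ in the open ball $B_\delta(x)$ and every $g\in G$ there exist $i\neq j$ with $d(gx_i,gx_j)<\varepsilon$. A tuple $(x_1,\dots,x_m)\in X^m$ is $m$-regionally proximal if for each $\varepsilon>0$ there exist $x_1',\dots,x_m'\in X$ with $d(x_i,x_i')<\varepsilon$ for all $i$, and $g\in G$ with $d(gx_i',gx_j')<\varepsilon$ for all $i,j$; $Q_m(X,G)$ is the set of such tuples. $\Delta^{(m)}(X)=\{(x_1,\dots,x_m)\in X^m: x_i=x_j$ for some $i\neq j\}$. *)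

theory Defs
  imports "HOL-Analysis.Analysis"
begin

definition continuous_action :: "('g::topological_group_add \<Rightarrow> 'x::metric_space \<Rightarrow> 'x) \<Rightarrow> 'x set \<Rightarrow> bool" where
  "continuous_action act X \<longleftrightarrow>
     (\<forall>g x. x \<in> X \<longrightarrow> act g x \<in> X) \<and>
     (\<forall>x\<in>X. act 0 x = x) \<and>
     (\<forall>g h x. x \<in> X \<longrightarrow> act (g + h) x = act g (act h x)) \<and>
     continuous_on (UNIV \<times> X) (\<lambda>p. act (fst p) (snd p))"

definition minimal_action :: "('g \<Rightarrow> 'x::metric_space \<Rightarrow> 'x) \<Rightarrow> 'x set \<Rightarrow> bool" where
  "minimal_action act X \<longleftrightarrow> (\<forall>x\<in>X. X \<subseteq> closure (range (\<lambda>g. act g x)))"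

definition m_equicontinuous :: "('g \<Rightarrow> 'x::metric_space \<Rightarrow> 'x) \<Rightarrow> 'x set \<Rightarrow> nat \<Rightarrow> bool" where
  "m_equicontinuous act X m \<longleftrightarrow>
     (\<forall>x\<in>X. \<forall>\<epsilon>>0. \<exists>\<delta>>0. \<forall>xs. (\<forall>i<m. xs i \<in> X \<inter> ball x \<delta>) \<longrightarrow>
        (\<forall>g. \<exists>i<m. \<exists>j<m. i \<noteq> j \<and> dist (act g (xs i)) (act g (xs j)) < \<epsilon>))"

text \<open>m-tuples are represented as extensional functions on {..<m}.\<close>
definition Q_m :: "('g \<Rightarrow> 'x::metric_space \<Rightarrow> 'x) \<Rightarrow> 'x set \<Rightarrow> nat \<Rightarrow> (nat \<Rightarrow> 'x) set" where
  "Q_m act X m = {xs \<in> {..<m} \<rightarrow>\<^sub>E X. \<forall>\<epsilon>>0. \<exists>xs' \<in> {..<m} \<rightarrow>\<^sub>E X. \<exists>g.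
      (\<forall>i<m. dist (xs i) (xs' i) < \<epsilon>) \<and>
      (\<forall>i<m. \<forall>j<m. dist (act g (xs' i)) (act g (xs' j)) < \<epsilon>)}"

definition Delta_m :: "'x set \<Rightarrow> nat \<Rightarrow> (nat \<Rightarrow> 'x) set" where
  "Delta_m X m = {xs \<in> {..<m} \<rightarrow>\<^sub>E X. \<exists>i<m. \<exists>j<m. i \<noteq> j \<and> xs i = xs j}"

end

theory Submission
  imports Defs
begin

lemma multi_subseq:
  fixes f :: "nat \<Rightarrow> nat \<Rightarrow> 'x::metric_space"
  assumes "compact X" "\<forall>n i. f n i \<in> X"
  shows "\<exists>r l. strict_mono r \<and> (\<forall>i<k. l i \<in> X \<and> (\<lambda>n. f (r n) i) \<longlonglongrightarrow> l i)"
proof (induction k)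
  case 0
  show ?case by (intro exI[of _ id]) (auto simp: strict_mono_def)
next
  case (Suc k)
  then obtain r l where r: "strict_mono r" and l: "\<forall>i<k. l i \<in> X \<and> (\<lambda>n. f (r n) i) \<longlonglongrightarrow> l i" by blast
  have "\<forall>n. f (r n) k \<in> X" using assms by auto
  then obtain a r' where a: "a \<in> X" "strict_mono r'" "((\<lambda>n. f (r n) k) \<circ> r') \<longlonglongrightarrow> a"
    using compact_imp_seq_compact[OF assms(1)] unfolding seq_compact_def by metis
  define l' where "l' = l(k := a)"
  have "strict_mono (r \<circ> r')" using r a(2) by (simp add: strict_mono_o)
  moreover have "\<forall>i<Suc k. l' i \<in> X \<and> (\<lambda>n. f ((r\<circ>r') n) i) \<longlonglongrightarrow> l' i"
  proof (intro allI impI)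
    fix i assume i: "i < Suc k"
    show "l' i \<in> X \<and> (\<lambda>n. f ((r\<circ>r') n) i) \<longlonglongrightarrow> l' i"
    proof (cases "i = k")
      case True then show ?thesis using a by (simp add: l'_def o_def)
    next
      case False with i have ik: "i<k" by simp
      with l have "(\<lambda>n. f (r n) i) \<longlonglongrightarrow> l i" by auto
      from LIMSEQ_subseq_LIMSEQ[OF this a(2)] show ?thesis using False l ik by (simp add: l'_def o_def)
    qed
  qed
  ultimately show ?case by blast
qed

lemma act_inv:
  fixes act :: "'g::topological_group_add \<Rightarrow> 'x::metric_space \<Rightarrow> 'x"
  assumes "continuous_action act X" "p \<in> X"
  shows "act (-g) (act g p) = p"
proof -
  have "act (-g) (act g p) = act (-g + g) p" using assms unfolding continuous_action_def by metis
  also have "\<dots> = p" using assms unfolding continuous_action_def by simp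
  finally show ?thesis .
qed

lemma dirA:
  fixes act :: "'g::topological_group_add \<Rightarrow> 'x::metric_space \<Rightarrow> 'x"
  assumes cX: "compact X" and ca: "continuous_action act X" and m2: "m \<ge> 2"
    and eq: "m_equicontinuous act X m"
  shows "Q_m act X m - Delta_m X m = {}"
proof (rule ccontr)
  assume "Q_m act X m - Delta_m X m \<noteq> {}"
  then obtain y where yQ: "y \<in> Q_m act X m" and yD: "y \<notin> Delta_m X m" by blast
  have yE: "y \<in> {..<m} \<rightarrow>\<^sub>E X" using yQ unfolding Q_m_def by auto
  have ydist: "\<And>i j. i<m \<Longrightarrow> j<m \<Longrightarrow> i \<noteq> j \<Longrightarrow> y i \<noteq> y j"
    using yD yE unfolding Delta_m_def by auto
  define I where "I = {(i,j). i<m \<and> j<m \<and> i \<noteq> j}"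
  define D where "D = (\<lambda>(i,j). dist (y i) (y j)) ` I"
  have "I \<subseteq> {..<m} \<times> {..<m}" unfolding I_def by auto
  hence finI: "finite I" by (rule finite_subset) auto
  have "(0,1) \<in> I" using m2 unfolding I_def by auto
  hence Dne: "D \<noteq> {}" unfolding D_def by auto
  have finD: "finite D" using finI unfolding D_def by auto
  define e0 where "e0 = Min D"
  have e0pos: "e0 > 0" unfolding e0_def using finD Dne ydist
    by (subst Min_gr_iff) (auto simp: D_def I_def)
  have e0le: "\<And>i j. i<m \<Longrightarrow> j<m \<Longrightarrow> i \<noteq> j \<Longrightarrow> e0 \<le> dist (y i) (y j)"
  proof -
    fix i j assume "i<m" "j<m" "i \<noteq> j"
    hence "dist (y i) (y j) \<in> D" unfolding D_def I_def by force
    thus "e0 \<le> dist (y i) (y j)" unfolding e0_def using finD by simp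
  qed
  have "\<forall>z\<in>X. \<exists>\<delta>>0. \<forall>xs. (\<forall>i<m. xs i \<in> X \<inter> ball z \<delta>) \<longrightarrow>
        (\<forall>g. \<exists>i<m. \<exists>j<m. i \<noteq> j \<and> dist (act g (xs i)) (act g (xs j)) < e0/2)"
  proof
    fix z assume "z \<in> X"
    moreover have "e0/2 > 0" using e0pos by simp
    ultimately show "\<exists>\<delta>>0. \<forall>xs. (\<forall>i<m. xs i \<in> X \<inter> ball z \<delta>) \<longrightarrow>
        (\<forall>g. \<exists>i<m. \<exists>j<m. i \<noteq> j \<and> dist (act g (xs i)) (act g (xs j)) < e0/2)"
    proof -
      have "\<forall>\<epsilon>>0. \<exists>\<delta>>0. \<forall>xs. (\<forall>i<m. xs i \<in> X \<inter> ball z \<delta>) \<longrightarrow>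
        (\<forall>g. \<exists>i<m. \<exists>j<m. i \<noteq> j \<and> dist (act g (xs i)) (act g (xs j)) < \<epsilon>)"
        using eq \<open>z \<in> X\<close> unfolding m_equicontinuous_def by (rule bspec)
      from this[rule_format, OF \<open>e0/2 > 0\<close>] show ?thesis .
    qed
  qed
  from bchoice[OF this] obtain d where d: "\<forall>z\<in>X. d z > 0 \<and> (\<forall>xs. (\<forall>i<m. xs i \<in> X \<inter> ball z (d z)) \<longrightarrow>
        (\<forall>g. \<exists>i<m. \<exists>j<m. i \<noteq> j \<and> dist (act g (xs i)) (act g (xs j)) < e0/2))"
    by auto
  have cov: "X \<subseteq> \<Union>((\<lambda>z. ball z (d z)) ` X)"
  proof
    fix x assume x: "x \<in> X"
    hence "x \<in> ball x (d x)" using d by simp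
    thus "x \<in> \<Union>((\<lambda>z. ball z (d z)) ` X)" using x by blast
  qed
  have opn: "\<And>G. G \<in> (\<lambda>z. ball z (d z)) ` X \<Longrightarrow> open G" by auto
  obtain e where e: "0 < e" "\<And>w. w \<in> X \<Longrightarrow> \<exists>G \<in> (\<lambda>z. ball z (d z)) ` X. ball w e \<subseteq> G"
    using Heine_Borel_lemma[OF cX cov opn] by blast
  define \<epsilon> where "\<epsilon> = min e (e0/4)"
  have "\<epsilon> > 0" using e e0pos unfolding \<epsilon>_def by auto
  moreover have "\<forall>\<epsilon>>0. \<exists>xs' \<in> {..<m} \<rightarrow>\<^sub>E X. \<exists>g.
      (\<forall>i<m. dist (y i) (xs' i) < \<epsilon>) \<and>
      (\<forall>i<m. \<forall>j<m. dist (act g (xs' i)) (act g (xs' j)) < \<epsilon>)"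
    using yQ unfolding Q_m_def mem_Collect_eq by (rule conjunct2)
  ultimately have "\<exists>xs' \<in> {..<m} \<rightarrow>\<^sub>E X. \<exists>g.
      (\<forall>i<m. dist (y i) (xs' i) < \<epsilon>) \<and>
      (\<forall>i<m. \<forall>j<m. dist (act g (xs' i)) (act g (xs' j)) < \<epsilon>)" by blast
  then obtain y' g where y'E: "y' \<in> {..<m} \<rightarrow>\<^sub>E X"
    and y'1: "\<forall>i<m. dist (y i) (y' i) < \<epsilon>"
    and y'2: "\<forall>i<m. \<forall>j<m. dist (act g (y' i)) (act g (y' j)) < \<epsilon>"
    by blast
  have y'X: "\<And>i. i<m \<Longrightarrow> y' i \<in> X" using y'E by auto
  have actX: "\<And>h p. p \<in> X \<Longrightarrow> act h p \<in> X" using ca unfolding continuous_action_def by auto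
  define w where "w = act g (y' 0)"
  have wX: "w \<in> X" unfolding w_def using y'X m2 actX by auto
  obtain z where zX: "z \<in> X" and bz: "ball w e \<subseteq> ball z (d z)" using e(2)[OF wX] by auto
  define xs where "xs = (\<lambda>i. act g (y' i))"
  have "\<forall>i<m. xs i \<in> X \<inter> ball z (d z)"
  proof (intro allI impI)
    fix i assume i: "i<m"
    have "dist w (xs i) < e" using y'2 i m2 unfolding w_def xs_def \<epsilon>_def by force
    thus "xs i \<in> X \<inter> ball z (d z)" using bz actX y'X i unfolding xs_def by auto
  qed
  moreover have "\<forall>xs. (\<forall>i<m. xs i \<in> X \<inter> ball z (d z)) \<longrightarrow>
        (\<forall>g. \<exists>i<m. \<exists>j<m. i \<noteq> j \<and> dist (act g (xs i)) (act g (xs j)) < e0/2)"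
    using bspec[OF d zX] by (rule conjunct2)
  ultimately have "\<exists>i<m. \<exists>j<m. i \<noteq> j \<and> dist (act (-g) (xs i)) (act (-g) (xs j)) < e0/2"
    by simp
  then obtain i j where ij: "i<m" "j<m" "i\<noteq>j"
    and lt: "dist (act (-g) (xs i)) (act (-g) (xs j)) < e0/2"
    by blast
  have "dist (y' i) (y' j) < e0/2" using lt act_inv[OF ca y'X[OF ij(1)]] act_inv[OF ca y'X[OF ij(2)]]
    unfolding xs_def by simp
  moreover have "dist (y i) (y j) \<le> dist (y i) (y' i) + dist (y' i) (y' j) + dist (y' j) (y j)"
    using dist_triangle[of "y i" "y j" "y' i"] dist_triangle[of "y' i" "y j" "y' j"] by linarith
  moreover have "dist (y' j) (y j) < e0/4" using y'1 ij unfolding \<epsilon>_def by (simp add: dist_commute)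
  moreover have "dist (y i) (y' i) < e0/4" using y'1 ij unfolding \<epsilon>_def by simp
  ultimately show False using e0le[OF ij] by linarith
qed

lemma dirB:
  fixes act :: "'g::topological_group_add \<Rightarrow> 'x::metric_space \<Rightarrow> 'x"
  assumes cX: "compact X" and ca: "continuous_action act X" and m2: "m \<ge> 2"
    and QD: "Q_m act X m - Delta_m X m = {}"
  shows "m_equicontinuous act X m"
proof (rule ccontr)
  assume "\<not> m_equicontinuous act X m"
  then obtain x where xX: "x \<in> X" and nx: "\<not> (\<forall>\<epsilon>>0. \<exists>\<delta>>0. \<forall>xs. (\<forall>i<m. xs i \<in> X \<inter> ball x \<delta>) \<longrightarrow>
        (\<forall>g. \<exists>i<m. \<exists>j<m. i \<noteq> j \<and> dist (act g (xs i)) (act g (xs j)) < \<epsilon>))"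
    unfolding m_equicontinuous_def by blast
  then obtain \<epsilon> where ep: "\<epsilon> > 0" and ne: "\<not> (\<exists>\<delta>>0. \<forall>xs. (\<forall>i<m. xs i \<in> X \<inter> ball x \<delta>) \<longrightarrow>
        (\<forall>g. \<exists>i<m. \<exists>j<m. i \<noteq> j \<and> dist (act g (xs i)) (act g (xs j)) < \<epsilon>))"
    by blast
  have bad: "\<forall>\<delta>>0. \<exists>xs. (\<forall>i<m. xs i \<in> X \<inter> ball x \<delta>) \<and>
        (\<exists>g. \<forall>i<m. \<forall>j<m. i \<noteq> j \<longrightarrow> \<not> dist (act g (xs i)) (act g (xs j)) < \<epsilon>)"
  proof (intro allI impI)
    fix \<delta> :: real assume "\<delta> > 0"
    with ne have "\<not> (\<forall>xs. (\<forall>i<m. xs i \<in> X \<inter> ball x \<delta>) \<longrightarrow>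
        (\<forall>g. \<exists>i<m. \<exists>j<m. i \<noteq> j \<and> dist (act g (xs i)) (act g (xs j)) < \<epsilon>))" by blast
    then obtain xs where "\<forall>i<m. xs i \<in> X \<inter> ball x \<delta>" and
      "\<not> (\<forall>g. \<exists>i<m. \<exists>j<m. i \<noteq> j \<and> dist (act g (xs i)) (act g (xs j)) < \<epsilon>)" by blast
    then obtain g where "\<forall>i<m. xs i \<in> X \<inter> ball x \<delta>" and
      "\<not> (\<exists>i<m. \<exists>j<m. i \<noteq> j \<and> dist (act g (xs i)) (act g (xs j)) < \<epsilon>)" by blast
    thus "\<exists>xs. (\<forall>i<m. xs i \<in> X \<inter> ball x \<delta>) \<and>
        (\<exists>g. \<forall>i<m. \<forall>j<m. i \<noteq> j \<longrightarrow> \<not> dist (act g (xs i)) (act g (xs j)) < \<epsilon>)" by blast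
  qed
  have "\<forall>n. \<exists>xs g. (\<forall>i<m. xs i \<in> X \<inter> ball x (1 / real (Suc n))) \<and>
        (\<forall>i<m. \<forall>j<m. i \<noteq> j \<longrightarrow> \<not> dist (act g (xs i)) (act g (xs j)) < \<epsilon>)"
  proof
    fix n :: nat
    have "(1 / real (Suc n)) > 0" by simp
    from bad[rule_format, OF this] show "\<exists>xs g. (\<forall>i<m. xs i \<in> X \<inter> ball x (1 / real (Suc n))) \<and>
        (\<forall>i<m. \<forall>j<m. i \<noteq> j \<longrightarrow> \<not> dist (act g (xs i)) (act g (xs j)) < \<epsilon>)" by blast
  qed
  then obtain xs g where xsg: "\<And>n. (\<forall>i<m. xs n i \<in> X \<inter> ball x (1 / real (Suc n))) \<and>
        (\<forall>i<m. \<forall>j<m. i \<noteq> j \<longrightarrow> \<not> dist (act (g n) (xs n i)) (act (g n) (xs n j)) < \<epsilon>)"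
    by metis
  have actX: "\<And>h p. p \<in> X \<Longrightarrow> act h p \<in> X" using ca unfolding continuous_action_def by auto
  define f where "f n i = (if i < m then act (g n) (xs n i) else x)" for n i
  have fX: "\<forall>n i. f n i \<in> X" using xsg xX actX unfolding f_def by auto
  obtain r l where r: "strict_mono r" and
    l: "\<forall>i<m. l i \<in> X \<and> (\<lambda>n. f (r n) i) \<longlonglongrightarrow> l i"
    using multi_subseq[OF cX fX, of m] by blast
  define L where "L = restrict l {..<m}"
  have LE: "L \<in> {..<m} \<rightarrow>\<^sub>E X" using l unfolding L_def by auto
  have ldist: "\<epsilon> \<le> dist (l i) (l j)" if "i<m" "j<m" "i\<noteq>j" for i j
  proof -
    have "(\<lambda>n. dist (f (r n) i) (f (r n) j)) \<longlonglongrightarrow> dist (l i) (l j)"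
      using l that by (intro tendsto_dist) auto
    moreover have "\<forall>n. \<epsilon> \<le> dist (f (r n) i) (f (r n) j)"
    proof
      fix n show "\<epsilon> \<le> dist (f (r n) i) (f (r n) j)"
        using conjunct2[OF xsg[of "r n"]] that unfolding f_def by (simp add: not_less)
    qed
    ultimately show ?thesis by (intro LIMSEQ_le_const) auto
  qed
  have "L \<notin> Delta_m X m"
  proof
    assume "L \<in> Delta_m X m"
    then obtain i j where "i<m" "j<m" "i\<noteq>j" "L i = L j" unfolding Delta_m_def by auto
    with ldist[of i j] ep show False unfolding L_def by auto
  qed
  moreover have "L \<in> Q_m act X m"
    unfolding Q_m_def mem_Collect_eq
  proof (intro conjI LE allI impI)
    fix \<eta> :: real assume eta: "\<eta> > 0"
    have "\<forall>i\<in>{..<m}. eventually (\<lambda>n. dist (f (r n) i) (l i) < \<eta>) sequentially"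
      using l eta by (auto intro: tendstoD)
    hence "eventually (\<lambda>n. \<forall>i\<in>{..<m}. dist (f (r n) i) (l i) < \<eta>) sequentially"
      by (intro eventually_ball_finite) auto
    then obtain N1 where N1: "\<And>n. n \<ge> N1 \<Longrightarrow> \<forall>i\<in>{..<m}. dist (f (r n) i) (l i) < \<eta>"
      unfolding eventually_sequentially by blast
    obtain N2 where N2: "inverse (real (Suc N2)) < \<eta>/2" using reals_Archimedean[of "\<eta>/2"] eta by auto
    define n where "n = max N1 N2"
    have c1: "\<forall>i<m. dist (f (r n) i) (l i) < \<eta>" using N1[of n] unfolding n_def by auto
    have "N2 \<le> r n" using seq_suble[OF r, of n] unfolding n_def by linarith
    hence "inverse (real (Suc (r n))) \<le> inverse (real (Suc N2))"
      by (intro le_imp_inverse_le) auto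
    moreover have "1 / real (Suc (r n)) = inverse (real (Suc (r n)))" by (rule inverse_eq_divide[symmetric])
    ultimately have small: "1 / real (Suc (r n)) < \<eta>/2" using N2 by linarith
    define xs' where "xs' = restrict (f (r n)) {..<m}"
    have xs'E: "xs' \<in> {..<m} \<rightarrow>\<^sub>E X" using fX unfolding xs'_def by auto
    have bk: "\<And>i. i<m \<Longrightarrow> act (- g (r n)) (xs' i) = xs (r n) i"
    proof -
      fix i assume im: "i<m"
      have "xs (r n) i \<in> X" using xsg[of "r n"] im by auto
      thus "act (- g (r n)) (xs' i) = xs (r n) i"
        using act_inv[OF ca, of "xs (r n) i" "g (r n)"] im unfolding xs'_def f_def by simp
    qed
    show "\<exists>xs' \<in> {..<m} \<rightarrow>\<^sub>E X. \<exists>g.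
      (\<forall>i<m. dist (L i) (xs' i) < \<eta>) \<and>
      (\<forall>i<m. \<forall>j<m. dist (act g (xs' i)) (act g (xs' j)) < \<eta>)"
    proof (intro bexI[OF _ xs'E] exI[of _ "- g (r n)"] conjI allI impI)
      fix i assume "i<m"
      thus "dist (L i) (xs' i) < \<eta>" using c1 unfolding L_def xs'_def by (simp add: dist_commute)
    next
      fix i j assume ij: "i<m" "j<m"
      have "dist x (xs (r n) i) < 1 / real (Suc (r n))" "dist x (xs (r n) j) < 1 / real (Suc (r n))"
        using xsg[of "r n"] ij by auto
      moreover have "dist (xs (r n) i) (xs (r n) j) \<le> dist x (xs (r n) i) + dist x (xs (r n) j)"
        by (rule dist_triangle3)
      ultimately show "dist (act (- g (r n)) (xs' i)) (act (- g (r n)) (xs' j)) < \<eta>"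
        using bk ij small by simp
    qed
  qed
  ultimately show False using QD by blast
qed

theorem theorem4p6:
  fixes act :: "'g::{topological_group_add, t2_space} \<Rightarrow> 'x::metric_space \<Rightarrow> 'x"
    and X :: "'x set" and m :: nat
  assumes "locally_compact_space (euclidean :: 'g topology)"
    and "compact X"
    and "continuous_action act X"
    and "minimal_action act X"
    and "m \<ge> 2"
  shows "m_equicontinuous act X m \<longleftrightarrow> Q_m act X m - Delta_m X m = {}"
  using dirA[OF assms(2,3,5)] dirB[OF assms(2,3,5)] by blast

end
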